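(* Let $Q=[u_1,\dots,u_n]\subset\mathbb{S}^2$ be a spherical polygon and let $u_iu_{i+1}$ and $u_ju_{j+1}$ be two edges with $j\neq i+1$ and $i\neq j+1$. Then $Q$ has an antipodal intersection at these edges if and only if $$\operatorname{sign}[u_i,u_{i+1},u_j]=\operatorname{sign}[u_i,u_j,u_{j+1}]=-\operatorname{sign}[u_i,u_{i+1},u_{j+1}]=-\operatorname{sign}[u_{i+1},u_j,u_{j+1}].$$ Moreover this happens if and only if the set $\{u_i,u_{i+1},u_j,u_{j+1}\}$ is not contained in any closed hemisphere.
   Context: A spherical polygon has edges the minimal great-circle arcs between consecutive vertices (indices mod $n$). Standing assumption: no three vertices of $Q$ are linearly dependent. $[a,b,c]$ denotes the determinant of $a,b,c\in\mathbb{R}^3$. An antipodal intersection at edges $e,f$ means that $e$ intersects the antipodal arc $-f$. *)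

theory Defs
  imports "HOL-Analysis.Analysis"
begin

definition det3 :: "real^3 \<Rightarrow> real^3 \<Rightarrow> real^3 \<Rightarrow> real" where
  "det3 a b c = det (vector [a, b, c] :: real^3^3)"

text \<open>The minimal great-circle arc between two non-antipodal unit vectors:
  the radial projection of the chord onto the sphere.\<close>
definition sarc :: "real^3 \<Rightarrow> real^3 \<Rightarrow> (real^3) set" where
  "sarc a b = (\<lambda>x. x /\<^sub>R norm x) ` closed_segment a b"

definition spherical_polygon :: "nat \<Rightarrow> (nat \<Rightarrow> real^3) \<Rightarrow> bool" where
  "spherical_polygon n u \<longleftrightarrow>
     (\<forall>k<n. norm (u k) = 1) \<and>
     (\<forall>a<n. \<forall>b<n. \<forall>c<n. a \<noteq> b \<and> a \<noteq> c \<and> b \<noteq> c \<longrightarrow>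
        distinct [u a, u b, u c] \<and> independent {u a, u b, u c})"

definition edge :: "nat \<Rightarrow> (nat \<Rightarrow> real^3) \<Rightarrow> nat \<Rightarrow> (real^3) set" where
  "edge n u k = sarc (u k) (u ((k + 1) mod n))"

definition antipodal_intersection :: "nat \<Rightarrow> (nat \<Rightarrow> real^3) \<Rightarrow> nat \<Rightarrow> nat \<Rightarrow> bool" where
  "antipodal_intersection n u i j \<longleftrightarrow> edge n u i \<inter> uminus ` edge n u j \<noteq> {}"

definition in_closed_hemisphere :: "(real^3) set \<Rightarrow> bool" where
  "in_closed_hemisphere S \<longleftrightarrow> (\<exists>v. v \<noteq> 0 \<and> S \<subseteq> {x. v \<bullet> x \<ge> 0})"

end

theory Submission imports Defs "HOL-Analysis.Cross3" begin
lemma ind3: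
  fixes a b c :: "real^3"
  assumes "distinct [a,b,c]" "independent {a,b,c}" "x *\<^sub>R a + y *\<^sub>R b + z *\<^sub>R c = 0"
  shows "x = 0 \<and> y = 0 \<and> z = 0"
proof -
  define f where "f v = (if v = a then x else if v = b then y else z)" for v
  have d: "a \<noteq> b" "a \<noteq> c" "b \<noteq> c" using assms(1) by auto
  have s: "(\<Sum>v\<in>{a,b,c}. f v *\<^sub>R v) = 0" using assms(3) d by (simp add: f_def add.assoc)
  have "\<forall>v\<in>{a,b,c}. f v = 0"
    using independentD[OF assms(2) _ _ s] by auto
  then show ?thesis using assms(1) by (auto simp: f_def)
qed

lemma det3_nz:
  fixes a b c :: "real^3"
  assumes "distinct [a,b,c]" "independent {a,b,c}"
  shows "det3 a b c \<noteq> 0"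
proof
  assume "det3 a b c = 0"
  hence "\<not> invertible (vector [a,b,c] :: real^3^3)" unfolding det3_def using invertible_det_nz by blast
  then obtain k where k: "(\<Sum>i\<in>UNIV. k i *s row i (vector [a,b,c] :: real^3^3)) = 0" and "\<exists>i. k i \<noteq> 0"
    unfolding invertible_right_inverse matrix_right_invertible_independent_rows by blast
  have "k 1 *\<^sub>R a + k 2 *\<^sub>R b + k 3 *\<^sub>R c = 0" using k
    by (simp add: sum_3 row_def vector_def scalar_mult_eq_scaleR vec_lambda_eta)
  from ind3[OF assms this] \<open>\<exists>i. k i \<noteq> 0\<close> show False
    by (metis exhaust_3)
qed

lemma det3_expand: "det3 a b c = a$1 * b$2 * c$3 - a$1 * b$3 * c$2 - a$2 * b$1 * c$3
   + a$2 * b$3 * c$1 + a$3 * b$1 * c$2 - a$3 * b$2 * c$1"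
  unfolding det3_def by (simp add: det_3 vector_def algebra_simps)

lemma cramer: "det3 b c d *\<^sub>R a - det3 a c d *\<^sub>R b + det3 a b d *\<^sub>R c - det3 a b c *\<^sub>R d = 0"
  by (simp add: vec_eq_iff forall_3 det3_expand algebra_simps)

lemma det3_lin: "det3 x y (\<alpha> *\<^sub>R a + \<beta> *\<^sub>R b + \<gamma> *\<^sub>R c + \<delta> *\<^sub>R d) =
   \<alpha> * det3 x y a + \<beta> * det3 x y b + \<gamma> * det3 x y c + \<delta> * det3 x y d"
  by (simp add: det3_expand algebra_simps)

lemma det3_alt: "det3 a b c = - det3 b a c" "det3 a b c = - det3 a c b" "det3 a b c = det3 b c a"
  by (simp_all add: det3_expand algebra_simps)

lemma dotcross: "(cross3 y z) \<bullet> x = det3 x y z"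
  by (simp add: cross3_simps det3_expand forall_3)

lemma cross_vec: "det3 a b c *\<^sub>R v = (v \<bullet> a) *\<^sub>R (cross3 b c) + (v \<bullet> b) *\<^sub>R (cross3 c a) + (v \<bullet> c) *\<^sub>R (cross3 a b)"
  by (simp add: cross3_simps det3_expand forall_3)

lemma signs:
  fixes \<alpha> \<beta> \<gamma> \<delta> D1 D2 D3 D4 :: real
  assumes "\<alpha> \<ge> 0" "\<beta> \<ge> 0" "\<gamma> \<ge> 0" "\<delta> \<ge> 0" "\<alpha> + \<beta> > 0" "\<gamma> + \<delta> > 0"
    "D1 \<noteq> 0" "D2 \<noteq> 0" "D3 \<noteq> 0" "D4 \<noteq> 0"
    "\<gamma> * D4 + \<delta> * D3 = 0" "\<delta> * D2 = \<beta> * D4" "\<alpha> * D4 + \<delta> * D1 = 0"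
  shows "(D1 > 0 \<and> D2 < 0 \<and> D3 > 0 \<and> D4 < 0) \<or> (D1 < 0 \<and> D2 > 0 \<and> D3 < 0 \<and> D4 > 0)"
proof -
  have "\<delta> \<noteq> 0"
  proof
    assume "\<delta> = 0" then have "\<gamma> = 0" using assms by simp
    then show False using assms \<open>\<delta> = 0\<close> by simp
  qed
  hence dp: "\<delta> > 0" using assms by simp
  have "\<gamma> \<noteq> 0" using assms dp by auto
  hence gp: "\<gamma> > 0" using assms by simp
  have "\<beta> \<noteq> 0" using assms dp by auto
  hence bp: "\<beta> > 0" using assms by simp
  have "\<alpha> \<noteq> 0" using assms dp by auto
  hence ap: "\<alpha> > 0" using assms by simp
  have e1: "D3 = - \<gamma> * D4 / \<delta>" "D2 = \<beta> * D4 / \<delta>" "D1 = - \<alpha> * D4 / \<delta>"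
    using assms dp by (auto simp: field_simps)
  show ?thesis
  proof (cases "D4 > 0")
    case True then show ?thesis unfolding e1 using ap bp gp dp
      by (auto simp: divide_pos_pos mult_pos_pos mult_neg_pos zero_less_divide_iff divide_less_0_iff mult_less_0_iff)
  next
    case False then have "D4 < 0" using assms by simp
    then show ?thesis unfolding e1 using ap bp gp dp
      by (auto simp: zero_less_divide_iff divide_less_0_iff mult_less_0_iff zero_less_mult_iff)
  qed
qed


definition goodsign :: "real \<Rightarrow> real \<Rightarrow> real \<Rightarrow> real \<Rightarrow> bool" where
  "goodsign D1 D2 D3 D4 \<longleftrightarrow> (D1 > 0 \<and> D2 < 0 \<and> D3 > 0 \<and> D4 < 0) \<or> (D1 < 0 \<and> D2 > 0 \<and> D3 < 0 \<and> D4 > 0)"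

lemma sarc_mem: "x \<in> sarc a b \<longleftrightarrow> (\<exists>s. 0 \<le> s \<and> s \<le> 1 \<and> x = ((1-s) *\<^sub>R a + s *\<^sub>R b) /\<^sub>R norm ((1-s) *\<^sub>R a + s *\<^sub>R b))"
  unfolding sarc_def closed_segment_def by auto

lemma antip_imp:
  fixes a b c d :: "real^3"
  assumes nz: "det3 b c d \<noteq> 0" "det3 a c d \<noteq> 0" "det3 a b d \<noteq> 0" "det3 a b c \<noteq> 0"
    and "sarc a b \<inter> uminus ` sarc c d \<noteq> {}"
  shows "goodsign (det3 b c d) (det3 a c d) (det3 a b d) (det3 a b c)"
proof -
  obtain x where x1: "x \<in> sarc a b" and x2: "x \<in> uminus ` sarc c d" using assms by blast
  obtain y where y: "y \<in> sarc c d" "x = - y" using x2 by blast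
  obtain s where s: "0 \<le> s" "s \<le> 1" and xs: "x = ((1-s) *\<^sub>R a + s *\<^sub>R b) /\<^sub>R norm ((1-s) *\<^sub>R a + s *\<^sub>R b)"
    using x1 sarc_mem by blast
  obtain t where t: "0 \<le> t" "t \<le> 1" and yt: "y = ((1-t) *\<^sub>R c + t *\<^sub>R d) /\<^sub>R norm ((1-t) *\<^sub>R c + t *\<^sub>R d)"
    using y(1) sarc_mem by blast
  define p where "p = (1-s) *\<^sub>R a + s *\<^sub>R b"
  define q where "q = (1-t) *\<^sub>R c + t *\<^sub>R d"
  have pnz: "p \<noteq> 0"
  proof
    assume "p = 0"
    then have "det3 p b c = 0" "det3 a p c = 0" by (simp_all add: det3_expand)
    then have "(1-s) * det3 a b c = 0" "s * det3 a b c = 0" unfolding p_def by (simp_all add: det3_expand algebra_simps)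
    then show False using nz by simp
  qed
  have qnz: "q \<noteq> 0"
  proof
    assume "q = 0"
    then have "det3 q b d = 0" "det3 a q c = 0" by (simp_all add: det3_expand)
    then have "(1-t) * det3 b c d = 0" "t * det3 a c d = 0" unfolding q_def by (simp_all add: det3_expand algebra_simps)
    then show False using nz by simp
  qed
  have eq: "p /\<^sub>R norm p = - (q /\<^sub>R norm q)" using xs yt y(2) p_def q_def by simp
  have "norm q *\<^sub>R p + norm p *\<^sub>R q = 0"
  proof -
    have h0: "(norm p * norm q) *\<^sub>R (p /\<^sub>R norm p) = (norm p * norm q) *\<^sub>R (- (q /\<^sub>R norm q))" using eq by simp
    have h1: "(norm p * norm q) *\<^sub>R (p /\<^sub>R norm p) = norm q *\<^sub>R p"
    proof -
      have "norm p * norm q * inverse (norm p) = norm q" using pnz by simp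
      then show ?thesis by (simp only: scaleR_scaleR)
    qed
    have h2: "(norm p * norm q) *\<^sub>R (- (q /\<^sub>R norm q)) = - (norm p *\<^sub>R q)"
    proof -
      have "norm p * norm q * inverse (norm q) = norm p" using qnz by simp
      then show ?thesis by (simp only: scaleR_scaleR scaleR_minus_right)
    qed
    have "norm q *\<^sub>R p = - (norm p *\<^sub>R q)" using h0 h1 h2 by metis
    then show ?thesis by (simp add: eq_neg_iff_add_eq_0)
  qed
  then have E: "((1-s) * norm q) *\<^sub>R a + (s * norm q) *\<^sub>R b + ((1-t) * norm p) *\<^sub>R c + (t * norm p) *\<^sub>R d = 0"
    unfolding p_def q_def by (simp add: algebra_simps)
  have "det3 a b (((1-s) * norm q) *\<^sub>R a + (s * norm q) *\<^sub>R b + ((1-t) * norm p) *\<^sub>R c + (t * norm p) *\<^sub>R d) = 0"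
       "det3 a c (((1-s) * norm q) *\<^sub>R a + (s * norm q) *\<^sub>R b + ((1-t) * norm p) *\<^sub>R c + (t * norm p) *\<^sub>R d) = 0"
       "det3 b c (((1-s) * norm q) *\<^sub>R a + (s * norm q) *\<^sub>R b + ((1-t) * norm p) *\<^sub>R c + (t * norm p) *\<^sub>R d) = 0"
    unfolding E by (simp_all add: det3_expand)
  then have "((1-t) * norm p) * det3 a b c + (t * norm p) * det3 a b d = 0"
     "(t * norm p) * det3 a c d = (s * norm q) * det3 a b c"
     "((1-s) * norm q) * det3 a b c + (t * norm p) * det3 b c d = 0"
    unfolding det3_lin by (simp_all add: det3_expand algebra_simps)
  moreover have "norm p > 0" "norm q > 0" using pnz qnz by auto
  ultimately show ?thesis unfolding goodsign_def
    apply (intro signs[of "(1-s) * norm q" "s * norm q" "(1-t) * norm p" "t * norm p"])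
    using s t nz by (auto simp: algebra_simps)
qed

lemma good_combo:
  fixes a b c d :: "real^3"
  assumes "goodsign (det3 b c d) (det3 a c d) (det3 a b d) (det3 a b c)"
  obtains \<alpha> \<beta> \<gamma> \<delta> where "\<alpha> > 0" "\<beta> > 0" "\<gamma> > 0" "\<delta> > 0"
    "\<alpha> *\<^sub>R a + \<beta> *\<^sub>R b + \<gamma> *\<^sub>R c + \<delta> *\<^sub>R d = 0"
proof -
  have C: "det3 b c d *\<^sub>R a + (- det3 a c d) *\<^sub>R b + det3 a b d *\<^sub>R c + (- det3 a b c) *\<^sub>R d = 0"
    using cramer[of b c d a] by (simp add: algebra_simps)
  have C2: "(- det3 b c d) *\<^sub>R a + det3 a c d *\<^sub>R b + (- det3 a b d) *\<^sub>R c + det3 a b c *\<^sub>R d = 0"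
    using cramer[of b c d a] by (simp add: algebra_simps)
  show ?thesis using assms unfolding goodsign_def
  proof
    assume "0 < det3 b c d \<and> det3 a c d < 0 \<and> 0 < det3 a b d \<and> det3 a b c < 0"
    then show ?thesis using that[OF _ _ _ _ C] by auto
  next
    assume "det3 b c d < 0 \<and> det3 a c d > 0 \<and> det3 a b d < 0 \<and> det3 a b c > 0"
    then show ?thesis using that[OF _ _ _ _ C2] by auto
  qed
qed

lemma imp_antip:
  fixes a b c d :: "real^3"
  assumes "goodsign (det3 b c d) (det3 a c d) (det3 a b d) (det3 a b c)"
  shows "sarc a b \<inter> uminus ` sarc c d \<noteq> {}"
proof -
  obtain \<alpha> \<beta> \<gamma> \<delta> where pos: "\<alpha> > 0" "\<beta> > 0" "\<gamma> > 0" "\<delta> > 0"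
    and E: "\<alpha> *\<^sub>R a + \<beta> *\<^sub>R b + \<gamma> *\<^sub>R c + \<delta> *\<^sub>R d = 0"
    using good_combo[OF assms] by blast
  define s where "s = \<beta> / (\<alpha> + \<beta>)"
  define t where "t = \<delta> / (\<gamma> + \<delta>)"
  define p where "p = (1-s) *\<^sub>R a + s *\<^sub>R b"
  define q where "q = (1-t) *\<^sub>R c + t *\<^sub>R d"
  define k where "k = (\<gamma> + \<delta>) / (\<alpha> + \<beta>)"
  have s01: "0 \<le> s" "s \<le> 1" using pos unfolding s_def by auto
  have t01: "0 \<le> t" "t \<le> 1" using pos unfolding t_def by auto
  have kp: "k > 0" using pos unfolding k_def by auto
  have p1: "(\<alpha> + \<beta>) *\<^sub>R p = \<alpha> *\<^sub>R a + \<beta> *\<^sub>R b"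
  proof -
    have "(\<alpha> + \<beta>) * (1 - s) = \<alpha>" "(\<alpha> + \<beta>) * s = \<beta>" using pos unfolding s_def by (simp_all add: field_simps)
    then show ?thesis unfolding p_def by (simp only: scaleR_add_right scaleR_scaleR)
  qed
  have q1: "(\<gamma> + \<delta>) *\<^sub>R q = \<gamma> *\<^sub>R c + \<delta> *\<^sub>R d"
  proof -
    have "(\<gamma> + \<delta>) * (1 - t) = \<gamma>" "(\<gamma> + \<delta>) * t = \<delta>" using pos unfolding t_def by (simp_all add: field_simps)
    then show ?thesis unfolding q_def by (simp only: scaleR_add_right scaleR_scaleR)
  qed
  have "(\<alpha> + \<beta>) *\<^sub>R p = - ((\<gamma> + \<delta>) *\<^sub>R q)" using E p1 q1 by (simp add: algebra_simps eq_neg_iff_add_eq_0)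
  then have pq: "p = - (k *\<^sub>R q)" unfolding k_def using pos
    by (metis (no_types, lifting) add_pos_pos less_irrefl scaleR_scaleR scaleR_minus_right divide_inverse inverse_eq_divide
        left_inverse mult.commute scaleR_one)
  have "p /\<^sub>R norm p = - (q /\<^sub>R norm q)"
    unfolding pq using kp by simp
  moreover have "p /\<^sub>R norm p \<in> sarc a b" unfolding sarc_mem p_def using s01 by blast
  moreover have "q /\<^sub>R norm q \<in> sarc c d" unfolding sarc_mem q_def using t01 by blast
  ultimately show ?thesis by (metis disjoint_iff image_eqI)
qed


lemma hemi_good:
  fixes a b c d :: "real^3"
  assumes g: "goodsign (det3 b c d) (det3 a c d) (det3 a b d) (det3 a b c)"
  shows "\<not> in_closed_hemisphere {a,b,c,d}"
proof
  assume "in_closed_hemisphere {a,b,c,d}"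
  then obtain v where v: "v \<noteq> 0" "v \<bullet> a \<ge> 0" "v \<bullet> b \<ge> 0" "v \<bullet> c \<ge> 0" "v \<bullet> d \<ge> 0"
    unfolding in_closed_hemisphere_def by auto
  obtain \<alpha> \<beta> \<gamma> \<delta> where pos: "\<alpha> > 0" "\<beta> > 0" "\<gamma> > 0" "\<delta> > 0"
    and E: "\<alpha> *\<^sub>R a + \<beta> *\<^sub>R b + \<gamma> *\<^sub>R c + \<delta> *\<^sub>R d = 0"
    using good_combo[OF g] by blast
  have "v \<bullet> (\<alpha> *\<^sub>R a + \<beta> *\<^sub>R b + \<gamma> *\<^sub>R c + \<delta> *\<^sub>R d) = 0" unfolding E by simp
  then have s: "\<alpha> * (v \<bullet> a) + \<beta> * (v \<bullet> b) + \<gamma> * (v \<bullet> c) + \<delta> * (v \<bullet> d) = 0"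
    by (simp add: inner_add_right)
  have "\<alpha> * (v \<bullet> a) \<ge> 0" "\<beta> * (v \<bullet> b) \<ge> 0" "\<gamma> * (v \<bullet> c) \<ge> 0" "\<delta> * (v \<bullet> d) \<ge> 0"
    using pos v by auto
  then have "\<alpha> * (v \<bullet> a) = 0" "\<beta> * (v \<bullet> b) = 0" "\<gamma> * (v \<bullet> c) = 0" using s by linarith+
  then have z: "v \<bullet> a = 0" "v \<bullet> b = 0" "v \<bullet> c = 0" using pos by auto
  have "det3 a b c \<noteq> 0" using g unfolding goodsign_def by auto
  moreover have "det3 a b c *\<^sub>R v = 0" unfolding cross_vec z by simp
  ultimately show False using v by simp
qed

lemma hemi_bad:
  fixes a b c d :: "real^3"
  assumes nz: "det3 b c d \<noteq> 0" "det3 a c d \<noteq> 0" "det3 a b d \<noteq> 0" "det3 a b c \<noteq> 0"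
    and ng: "\<not> goodsign (det3 b c d) (det3 a c d) (det3 a b d) (det3 a b c)"
  shows "in_closed_hemisphere {a,b,c,d}"
proof -
  have cyc: "det3 b a c = - det3 a b c" "det3 d a c = det3 a c d" "det3 c a b = det3 a b c"
    "det3 d a b = det3 a b d" "det3 c b d = - det3 b c d" "det3 a a c = 0" "det3 c a c = 0"
    "det3 a a b = 0" "det3 b a b = 0" "det3 b b d = 0" "det3 d b d = 0"
    by (simp_all add: det3_expand algebra_simps)
  have dots: "\<And>k y z x. (k *\<^sub>R cross3 y z) \<bullet> x = k * det3 x y z" by (simp add: dotcross)
  have wit: "in_closed_hemisphere {a,b,c,d}" if "v \<bullet> a \<ge> 0" "v \<bullet> b \<ge> 0" "v \<bullet> c \<ge> 0" "v \<bullet> d \<ge> 0"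
    "v \<bullet> a \<noteq> 0 \<or> v \<bullet> b \<noteq> 0 \<or> v \<bullet> c \<noteq> 0 \<or> v \<bullet> d \<noteq> 0" for v
    unfolding in_closed_hemisphere_def using that by (intro exI[of _ v]) auto
  consider "det3 a b c * det3 a c d < 0" | "det3 a b c * det3 a b d > 0" | "det3 a b d * det3 b c d < 0"
    | "det3 a b c * det3 a c d > 0" "det3 a b c * det3 a b d < 0" "det3 a b d * det3 b c d > 0"
    using nz by (meson linorder_neqE_linordered_idom mult_eq_0_iff)
  then show ?thesis
  proof cases
    case 1
    show ?thesis using 1 nz
      by (intro wit[of "det3 a c d *\<^sub>R cross3 a c"]) (auto simp: dotcross cyc mult_less_0_iff zero_le_mult_iff mult_le_0_iff)
  next
    case 2
    show ?thesis using 2 nz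
      by (intro wit[of "det3 a b c *\<^sub>R cross3 a b"]) (auto simp: dotcross cyc zero_less_mult_iff zero_le_mult_iff)
  next
    case 3
    show ?thesis using 3 nz
      by (intro wit[of "det3 a b d *\<^sub>R cross3 b d"]) (auto simp: dotcross cyc mult_less_0_iff zero_le_mult_iff mult_le_0_iff)
  next
    case 4
    then have False using ng nz unfolding goodsign_def
      by (auto simp: zero_less_mult_iff mult_less_0_iff)
    then show ?thesis ..
  qed
qed

lemma sign_equiv:
  fixes D1 D2 D3 D4 :: real
  assumes "D1 \<noteq> 0" "D2 \<noteq> 0" "D3 \<noteq> 0" "D4 \<noteq> 0"
  shows "(sgn D4 = sgn D2 \<and> sgn D2 = - sgn D3 \<and> - sgn D3 = - sgn D1) \<longleftrightarrow> goodsign D1 D2 D3 D4"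
  using assms unfolding goodsign_def by (auto simp: sgn_if split: if_splits)

theorem proposition3:
  fixes n :: nat and u :: "nat \<Rightarrow> real^3" and i j :: nat
  assumes "spherical_polygon n u"
    and "i < n" and "j < n" and "i \<noteq> j"
    and "j \<noteq> (i + 1) mod n" and "i \<noteq> (j + 1) mod n"
  defines "i' \<equiv> (i + 1) mod n" and "j' \<equiv> (j + 1) mod n"
  shows "(antipodal_intersection n u i j \<longleftrightarrow>
            (sgn (det3 (u i) (u i') (u j)) = sgn (det3 (u i) (u j) (u j')) \<and>
             sgn (det3 (u i) (u j) (u j')) = - sgn (det3 (u i) (u i') (u j')) \<and>
             - sgn (det3 (u i) (u i') (u j')) = - sgn (det3 (u i') (u j) (u j'))))
       \<and> (antipodal_intersection n u i j \<longleftrightarrow>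
            \<not> in_closed_hemisphere {u i, u i', u j, u j'})"
proof -
  have i'v: "i' = i + 1 \<or> (i' = 0 \<and> i + 1 = n)" unfolding i'_def using assms(2)
    by (metis Suc_eq_plus1 Suc_lessI mod_less mod_self)
  have j'v: "j' = j + 1 \<or> (j' = 0 \<and> j + 1 = n)" unfolding j'_def using assms(3)
    by (metis Suc_eq_plus1 Suc_lessI mod_less mod_self)
  have lt: "i' < n" "j' < n" using assms(2,3) unfolding i'_def j'_def by simp_all
  have ne: "i \<noteq> i'" "j \<noteq> j'" "i' \<noteq> j'" "i \<noteq> j'" "j \<noteq> i'"
    using i'v j'v assms(2-6) unfolding i'_def[symmetric] j'_def[symmetric] by auto
  have poly: "\<And>x y z. x < n \<Longrightarrow> y < n \<Longrightarrow> z < n \<Longrightarrow> x \<noteq> y \<Longrightarrow> x \<noteq> z \<Longrightarrow> y \<noteq> z \<Longrightarrow>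
      det3 (u x) (u y) (u z) \<noteq> 0"
    using assms(1) unfolding spherical_polygon_def by (metis det3_nz)
  have nz: "det3 (u i') (u j) (u j') \<noteq> 0" "det3 (u i) (u j) (u j') \<noteq> 0"
     "det3 (u i) (u i') (u j') \<noteq> 0" "det3 (u i) (u i') (u j) \<noteq> 0"
    using poly lt assms(2,3,4) ne by auto
  have ai: "antipodal_intersection n u i j \<longleftrightarrow> sarc (u i) (u i') \<inter> uminus ` sarc (u j) (u j') \<noteq> {}"
    unfolding antipodal_intersection_def edge_def i'_def j'_def by simp
  have g1: "antipodal_intersection n u i j \<longleftrightarrow>
     goodsign (det3 (u i') (u j) (u j')) (det3 (u i) (u j) (u j')) (det3 (u i) (u i') (u j')) (det3 (u i) (u i') (u j))"
    unfolding ai using antip_imp[OF nz] imp_antip by blast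
  have g2: "in_closed_hemisphere {u i, u i', u j, u j'} \<longleftrightarrow>
     \<not> goodsign (det3 (u i') (u j) (u j')) (det3 (u i) (u j) (u j')) (det3 (u i) (u i') (u j')) (det3 (u i) (u i') (u j))"
    using hemi_good hemi_bad[OF nz] by blast
  show ?thesis unfolding g1 g2 sign_equiv[OF nz] by simp
qed

end
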